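(* Let $q>0$, $q\neq 1$, and let $x(s)=c_1q^{s}+c_2q^{-s}+c_3$ be a lattice with $q^{\mu}:=c_1/c_2$ (when $c_2=0$ or $c_1=0$, i.e. a $q$-linear lattice, see the convention below). Let $\tilde\sigma$ be a polynomial of degree at most $2$ and $\tilde\tau$ a polynomial of degree at most $1$, and put $$\sigma(s)=\tilde\sigma(x(s))-\tfrac12\tilde\tau(x(s))\,\Delta x\!\left(s-\tfrac12\right),\qquad \tau(s)=\tilde\tau(x(s)).$$ Let $A(s)$ be an arbitrary continuous function not vanishing on the interval $(a,b)$ under consideration. Define the operators $$H(s;q):=-\frac{\sqrt{\sigma(-s-\mu+1)\sigma(s)}}{\nabla x(s)}e^{-\partial_s}-\frac{\sqrt{\sigma(-s-\mu)\sigma(s+1)}}{\Delta x(s)}e^{\partial_s}+\left(\frac{\sigma(-s-\mu)}{\Delta x(s)}+\frac{\sigma(s)}{\nabla x(s)}\right)I,$$ $$\mathfrak H(s;q):=\frac{1}{\nabla x_1(s)}\,A(s)\,H(s;q)\,\frac{1}{A(s)},$$ and, for a number $\alpha$, $$\mathfrak a^{\downarrow}_\alpha(s;q):=\frac{A(s)}{\sqrt{\nabla x_1(s)}}\,e^{-\alpha\partial_s}\left(e^{\partial_s}\sqrt{\frac{\sigma(s)}{\nabla x(s)}}-\sqrt{\frac{\sigma(-s-\mu)}{\Delta x(s)}}\right)\frac{1}{A(s)},$$ $$\mathfrak a^{\uparrow}_\alpha(s;q):=\frac{1}{\nabla x_1(s)}\,A(s)\left(\sqrt{\frac{\sigma(s)}{\nabla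 x(s)}}\,e^{-\partial_s}-\sqrt{\frac{\sigma(-s-\mu)}{\Delta x(s)}}\right)e^{\alpha\partial_s}\,\frac{\sqrt{\nabla x_1(s)}}{A(s)}.$$ Then for all $\alpha\in\mathbb C$, $\mathfrak H(s;q)=\mathfrak a^{\uparrow}_\alpha(s;q)\,\mathfrak a^{\downarrow}_\alpha(s;q)$.
   Context: Notation: $\Delta f(s)=f(s+1)-f(s)$, $\nabla f(s)=f(s)-f(s-1)$; $x_1(s):=x(s+\tfrac12)$; $e^{\beta\partial_s}$ is the shift operator $e^{\beta\partial_s}f(s)=f(s+\beta)$; a function written inside an operator product denotes the operator of multiplication by that function, and products of operators are compositions (acting on functions of $s$); $I$ is the identity operator. Convention: if the lattice is $q$-linear ($x(s)=c\,q^{\pm s}+c_3$), then every occurrence of $\sigma(-s-\mu+\beta)$ is to be read as $\sigma(t)+\tau(t)\Delta x(t-\tfrac12)$ evaluated at $t=s-\beta$ (i.e. $\sigma(-s-\mu)$ is replaced by $\sigma(s)+\tau(s)\Delta x(s-1/2)$). Square roots are taken formally (fixed branches). *)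

theory Defs
  imports "HOL-Analysis.Analysis" "HOL-Computational_Algebra.Polynomial"
begin

definition shift :: "complex \<Rightarrow> (complex \<Rightarrow> complex) \<Rightarrow> (complex \<Rightarrow> complex)" where
  "shift \<beta> f = (\<lambda>s. f (s + \<beta>))"

definition mult :: "(complex \<Rightarrow> complex) \<Rightarrow> (complex \<Rightarrow> complex) \<Rightarrow> (complex \<Rightarrow> complex)" where
  "mult g f = (\<lambda>s. g s * f s)"

definition opsub ::
  "((complex \<Rightarrow> complex) \<Rightarrow> (complex \<Rightarrow> complex)) \<Rightarrow> ((complex \<Rightarrow> complex) \<Rightarrow> (complex \<Rightarrow> complex))
     \<Rightarrow> (complex \<Rightarrow> complex) \<Rightarrow> (complex \<Rightarrow> complex)" where
  "opsub F G = (\<lambda>f s. F f s - G f s)"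

definition fdiff :: "(complex \<Rightarrow> complex) \<Rightarrow> complex \<Rightarrow> complex" where
  "fdiff x s = x (s + 1) - x s"

definition bdiff :: "(complex \<Rightarrow> complex) \<Rightarrow> complex \<Rightarrow> complex" where
  "bdiff x s = x s - x (s - 1)"

definition lat :: "real \<Rightarrow> complex \<Rightarrow> complex \<Rightarrow> complex \<Rightarrow> complex \<Rightarrow> complex" where
  "lat q c1 c2 c3 s = c1 * (complex_of_real q) powr s + c2 * (complex_of_real q) powr (- s) + c3"

definition sig :: "complex poly \<Rightarrow> complex poly \<Rightarrow> (complex \<Rightarrow> complex) \<Rightarrow> complex \<Rightarrow> complex" where
  "sig st tt x s = poly st (x s) - 1/2 * poly tt (x s) * fdiff x (s - 1/2)"

definition tau :: "complex poly \<Rightarrow> (complex \<Rightarrow> complex) \<Rightarrow> complex \<Rightarrow> complex" where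
  "tau tt x s = poly tt (x s)"

text \<open>sigbar s represents sigma(-s-mu); hence sigma(-s-mu+beta) = sigbar (s - beta).
  In the q-linear case (c1 = 0 or c2 = 0) it is sigma(s) + tau(s) Delta x(s - 1/2).\<close>
definition sigbar :: "complex \<Rightarrow> complex \<Rightarrow> complex \<Rightarrow> complex poly \<Rightarrow> complex poly
    \<Rightarrow> (complex \<Rightarrow> complex) \<Rightarrow> complex \<Rightarrow> complex" where
  "sigbar c1 c2 mu st tt x s =
     (if c1 \<noteq> 0 \<and> c2 \<noteq> 0 then sig st tt x (- s - mu)
      else sig st tt x s + tau tt x s * fdiff x (s - 1/2))"

definition nx1 :: "(complex \<Rightarrow> complex) \<Rightarrow> complex \<Rightarrow> complex" where
  "nx1 x s = bdiff (\<lambda>t. x (t + 1/2)) s"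

text \<open>H(s;q); rt is the (formal, fixed-branch) square root; sg = sigma, sb = sigbar.\<close>
definition Hop :: "(complex \<Rightarrow> complex) \<Rightarrow> (complex \<Rightarrow> complex) \<Rightarrow> (complex \<Rightarrow> complex)
    \<Rightarrow> (complex \<Rightarrow> complex) \<Rightarrow> (complex \<Rightarrow> complex) \<Rightarrow> (complex \<Rightarrow> complex)" where
  "Hop rt x sg sb f = (\<lambda>s.
      - (rt (sb (s - 1) * sg s) / bdiff x s) * f (s - 1)
      - (rt (sb s * sg (s + 1)) / fdiff x s) * f (s + 1)
      + (sb s / fdiff x s + sg s / bdiff x s) * f s)"

definition frakH :: "(complex \<Rightarrow> complex) \<Rightarrow> (complex \<Rightarrow> complex) \<Rightarrow> (complex \<Rightarrow> complex)
    \<Rightarrow> (complex \<Rightarrow> complex) \<Rightarrow> (complex \<Rightarrow> complex) \<Rightarrow> (complex \<Rightarrow> complex) \<Rightarrow> (complex \<Rightarrow> complex)" where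
  "frakH rt x sg sb A =
     mult (\<lambda>s. 1 / nx1 x s) \<circ> mult A \<circ> Hop rt x sg sb \<circ> mult (\<lambda>s. 1 / A s)"

definition adown :: "(complex \<Rightarrow> complex) \<Rightarrow> (complex \<Rightarrow> complex) \<Rightarrow> (complex \<Rightarrow> complex)
    \<Rightarrow> (complex \<Rightarrow> complex) \<Rightarrow> (complex \<Rightarrow> complex) \<Rightarrow> complex
    \<Rightarrow> (complex \<Rightarrow> complex) \<Rightarrow> (complex \<Rightarrow> complex)" where
  "adown rt x sg sb A \<alpha> =
     mult (\<lambda>s. A s / rt (nx1 x s)) \<circ> shift (- \<alpha>) \<circ>
     opsub (shift 1 \<circ> mult (\<lambda>s. rt (sg s / bdiff x s))) (mult (\<lambda>s. rt (sb s / fdiff x s))) \<circ>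
     mult (\<lambda>s. 1 / A s)"

definition aup :: "(complex \<Rightarrow> complex) \<Rightarrow> (complex \<Rightarrow> complex) \<Rightarrow> (complex \<Rightarrow> complex)
    \<Rightarrow> (complex \<Rightarrow> complex) \<Rightarrow> (complex \<Rightarrow> complex) \<Rightarrow> complex
    \<Rightarrow> (complex \<Rightarrow> complex) \<Rightarrow> (complex \<Rightarrow> complex)" where
  "aup rt x sg sb A \<alpha> =
     mult (\<lambda>s. 1 / nx1 x s) \<circ> mult A \<circ>
     opsub (mult (\<lambda>s. rt (sg s / bdiff x s)) \<circ> shift (- 1)) (mult (\<lambda>s. rt (sb s / fdiff x s))) \<circ>
     shift \<alpha> \<circ> mult (\<lambda>s. rt (nx1 x s) / A s)"

end

theory Submission
  imports Defs
begin

theorem theorem1: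
  fixes q :: real and c1 c2 c3 mu \<alpha> s :: complex
    and st tt :: "complex poly"
    and A rt f :: "complex \<Rightarrow> complex" and U :: "complex set"
    and x sg sb :: "complex \<Rightarrow> complex"
  defines "x \<equiv> lat q c1 c2 c3"
    and "sg \<equiv> sig st tt x"
    and "sb \<equiv> sigbar c1 c2 mu st tt x"
  assumes "q > 0" and "q \<noteq> 1"
    and "c1 \<noteq> 0 \<and> c2 \<noteq> 0 \<longrightarrow> of_real q powr mu = c1 / c2"
    and "degree st \<le> 2" and "degree tt \<le> 1"
    and "continuous_on U A" and "\<forall>z\<in>U. A z \<noteq> 0"
    and rt_sq: "\<forall>z. rt z * rt z = z"
    and branch1: "rt (sg s / bdiff x s) * rt (sb (s - 1) / fdiff x (s - 1))
                  = rt (sb (s - 1) * sg s) / bdiff x s"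
    and branch2: "rt (sb s / fdiff x s) * rt (sg (s + 1) / bdiff x (s + 1))
                  = rt (sb s * sg (s + 1)) / fdiff x s"
    and "s + \<alpha> - 1 \<in> U" and "s + \<alpha> \<in> U"
    and "nx1 x (s + \<alpha> - 1) \<noteq> 0" and "nx1 x (s + \<alpha>) \<noteq> 0"
  shows "frakH rt x sg sb A f s = (aup rt x sg sb A \<alpha> \<circ> adown rt x sg sb A \<alpha>) f s"
proof -
  define R1 where "R1 = (\<lambda>t. rt (sg t / bdiff x t))"
  define R2 where "R2 = (\<lambda>t. rt (sb t / fdiff x t))"
  define k where "k = (\<lambda>t. 1 / A t * f t)"
  have A1: "A (s + \<alpha> - 1) \<noteq> 0" "A (s + \<alpha>) \<noteq> 0" using assms by auto
  have r1: "rt (nx1 x (s + \<alpha> - 1)) \<noteq> 0" using rt_sq \<open>nx1 x (s + \<alpha> - 1) \<noteq> 0\<close> by (metis mult_zero_left)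
  have r2: "rt (nx1 x (s + \<alpha>)) \<noteq> 0" using rt_sq \<open>nx1 x (s + \<alpha>) \<noteq> 0\<close> by (metis mult_zero_left)
  have q1: "R1 s * R1 s = sg s / bdiff x s" "R2 s * R2 s = sb s / fdiff x s"
    using rt_sq unfolding R1_def R2_def by auto
  have b1: "R1 s * R2 (s - 1) = rt (sb (s - 1) * sg s) / bdiff x s" using branch1 unfolding R1_def R2_def by simp
  have b2: "R2 s * R1 (s + 1) = rt (sb s * sg (s + 1)) / fdiff x s" using branch2 unfolding R1_def R2_def by simp
  have L: "frakH rt x sg sb A f s = 1 / nx1 x s * (A s * (- (rt (sb (s - 1) * sg s) / bdiff x s) * k (s - 1)
      - (rt (sb s * sg (s + 1)) / fdiff x s) * k (s + 1)
      + (sb s / fdiff x s + sg s / bdiff x s) * k s))"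
    unfolding frakH_def Hop_def mult_def k_def comp_def by (rule refl)
  have R: "(aup rt x sg sb A \<alpha> \<circ> adown rt x sg sb A \<alpha>) f s = 1 / nx1 x s * (A s *
      (R1 s * (rt (nx1 x (s + - 1 + \<alpha>)) / A (s + - 1 + \<alpha>) * (A (s + - 1 + \<alpha>) / rt (nx1 x (s + - 1 + \<alpha>))
         * (R1 (s + - 1 + \<alpha> + - \<alpha> + 1) * k (s + - 1 + \<alpha> + - \<alpha> + 1) - R2 (s + - 1 + \<alpha> + - \<alpha>) * k (s + - 1 + \<alpha> + - \<alpha>))))
      - R2 s * (rt (nx1 x (s + \<alpha>)) / A (s + \<alpha>) * (A (s + \<alpha>) / rt (nx1 x (s + \<alpha>))
         * (R1 (s + \<alpha> + - \<alpha> + 1) * k (s + \<alpha> + - \<alpha> + 1) - R2 (s + \<alpha> + - \<alpha>) * k (s + \<alpha> + - \<alpha>))))))"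
    unfolding aup_def adown_def mult_def opsub_def shift_def R1_def R2_def k_def comp_def
    by (rule refl)
  have A1': "A (s + - 1 + \<alpha>) \<noteq> 0" "rt (nx1 x (s + - 1 + \<alpha>)) \<noteq> 0"
    using A1 r1 by (simp_all add: algebra_simps)
  have c: "\<And>a b X :: complex. a \<noteq> 0 \<Longrightarrow> b \<noteq> 0 \<Longrightarrow> b / a * (a / b * X) = X" by simp
  have e1: "rt (nx1 x (s + - 1 + \<alpha>)) / A (s + - 1 + \<alpha>) * (A (s + - 1 + \<alpha>) / rt (nx1 x (s + - 1 + \<alpha>))
         * (R1 (s + - 1 + \<alpha> + - \<alpha> + 1) * k (s + - 1 + \<alpha> + - \<alpha> + 1) - R2 (s + - 1 + \<alpha> + - \<alpha>) * k (s + - 1 + \<alpha> + - \<alpha>)))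
     = R1 s * k s - R2 (s - 1) * k (s - 1)"
    by (subst c[OF A1']) simp
  have e2: "rt (nx1 x (s + \<alpha>)) / A (s + \<alpha>) * (A (s + \<alpha>) / rt (nx1 x (s + \<alpha>))
         * (R1 (s + \<alpha> + - \<alpha> + 1) * k (s + \<alpha> + - \<alpha> + 1) - R2 (s + \<alpha> + - \<alpha>) * k (s + \<alpha> + - \<alpha>)))
     = R1 (s + 1) * k (s + 1) - R2 s * k s"
    by (subst c[OF A1(2) r2]) simp
  have p: "R1 s * (R1 s * k s - R2 (s - 1) * k (s - 1)) - R2 s * (R1 (s + 1) * k (s + 1) - R2 s * k s)
     = - (R1 s * R2 (s - 1)) * k (s - 1) - (R2 s * R1 (s + 1)) * k (s + 1) + (R2 s * R2 s + R1 s * R1 s) * k s"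
    by (simp add: algebra_simps)
  show ?thesis unfolding L R e1 e2 p q1 b1 b2 by (simp add: algebra_simps)
qed

end
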